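(* Let $X$ be a finite set, let $F_X,F'_X$ be filtrations over $X$ and let $C_X=\Phi(F_X)$, $C'_X=\Phi(F'_X)$ be their facegrams. Then $d_{\mathrm{I}}(C_X,C'_X)=d_{\mathrm{I}}(F_X,F'_X)$.
   Context: $\mathbf{pow}(X)$ is the set of nonempty subsets of $X$; a filtration is an order-preserving map $F_X:(\mathbf{pow}(X),\subset)\to(\mathbb{R},\leq)$. A face-set of $X$ is a family of pairwise inclusion-incomparable nonempty subsets of $X$, ordered by $\mathcal{S}\leq\mathcal{S}'$ iff each face of $\mathcal{S}$ is contained in a face of $\mathcal{S}'$. The facegram of $F_X$ is $\Phi(F_X)(t):=$ the set of inclusion-maximal elements of $\{\sigma\in\mathbf{pow}(X)\mid F_X(\sigma)\leq t\}$. Interleaving distances: $d_{\mathrm{I}}(C_X,C'_X):=\inf\{\varepsilon\geq0\mid C_X(t)\leq C'_X(t+\varepsilon)\text{ and }C'_X(t)\leq C_X(t+\varepsilon)\ \forall t\in\mathbb{R}\}$ and $d_{\mathrm{I}}(F_X,F'_X):=\max_{\sigma\in\mathbf{pow}(X)}|F_X(\sigma)-F'_X(\sigma)|$. *)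

theory Defs
  imports Complex_Main
begin

definition powne :: "'a set \<Rightarrow> 'a set set" where
  "powne X = {\<sigma>. \<sigma> \<subseteq> X \<and> \<sigma> \<noteq> {}}"

definition filtration :: "'a set \<Rightarrow> ('a set \<Rightarrow> real) \<Rightarrow> bool" where
  "filtration X F \<longleftrightarrow> (\<forall>\<sigma>\<in>powne X. \<forall>\<tau>\<in>powne X. \<sigma> \<subseteq> \<tau> \<longrightarrow> F \<sigma> \<le> F \<tau>)"

definition face_set :: "'a set \<Rightarrow> 'a set set \<Rightarrow> bool" where
  "face_set X S \<longleftrightarrow> S \<subseteq> powne X \<and> (\<forall>\<sigma>\<in>S. \<forall>\<tau>\<in>S. \<sigma> \<subseteq> \<tau> \<longrightarrow> \<sigma> = \<tau>)"

definition face_le :: "'a set set \<Rightarrow> 'a set set \<Rightarrow> bool" where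
  "face_le S S' \<longleftrightarrow> (\<forall>\<sigma>\<in>S. \<exists>\<tau>\<in>S'. \<sigma> \<subseteq> \<tau>)"

definition facegram :: "'a set \<Rightarrow> ('a set \<Rightarrow> real) \<Rightarrow> real \<Rightarrow> 'a set set" where
  "facegram X F t = {\<sigma> \<in> powne X. F \<sigma> \<le> t \<and>
      (\<forall>\<tau>\<in>powne X. F \<tau> \<le> t \<and> \<sigma> \<subseteq> \<tau> \<longrightarrow> \<tau> = \<sigma>)}"

definition dI_facegram :: "(real \<Rightarrow> 'a set set) \<Rightarrow> (real \<Rightarrow> 'a set set) \<Rightarrow> real" where
  "dI_facegram C C' = Inf {\<epsilon>. \<epsilon> \<ge> 0 \<and>
      (\<forall>t. face_le (C t) (C' (t + \<epsilon>)) \<and> face_le (C' t) (C (t + \<epsilon>)))}"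

definition dI_filtration :: "'a set \<Rightarrow> ('a set \<Rightarrow> real) \<Rightarrow> ('a set \<Rightarrow> real) \<Rightarrow> real" where
  "dI_filtration X F F' = Max (insert 0 ((\<lambda>\<sigma>. \<bar>F \<sigma> - F' \<sigma>\<bar>) ` powne X))"

end

theory Submission
  imports Defs
begin

lemma max_exists:
  assumes "finite X" "\<sigma> \<in> powne X" "F \<sigma> \<le> t"
  shows "\<exists>\<mu>\<in>facegram X F t. \<sigma> \<subseteq> \<mu>"
proof -
  let ?K = "{\<tau> \<in> powne X. F \<tau> \<le> t}"
  have "finite ?K" using assms(1) by (rule finite_subset[rotated, OF finite_Pow_iff[THEN iffD2]]) (auto simp: powne_def)
  from finite_has_maximal2[OF this, of \<sigma>] assms(2,3)
  obtain m where "m \<in> ?K" "\<sigma> \<subseteq> m" "\<forall>b\<in>?K. m \<subseteq> b \<longrightarrow> m = b" by auto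
  thus ?thesis unfolding facegram_def by auto
qed

lemma face_le_iff:
  assumes "finite X" "filtration X F" "filtration X F'"
  shows "face_le (facegram X F t) (facegram X F' s) \<longleftrightarrow>
    (\<forall>\<sigma>\<in>powne X. F \<sigma> \<le> t \<longrightarrow> F' \<sigma> \<le> s)"
proof
  assume h: "face_le (facegram X F t) (facegram X F' s)"
  show "\<forall>\<sigma>\<in>powne X. F \<sigma> \<le> t \<longrightarrow> F' \<sigma> \<le> s"
  proof (intro ballI impI)
    fix \<sigma> assume s: "\<sigma> \<in> powne X" "F \<sigma> \<le> t"
    obtain \<mu> where m: "\<mu> \<in> facegram X F t" "\<sigma> \<subseteq> \<mu>" using max_exists[of X \<sigma> F t] assms(1) s by blast
    then obtain \<tau> where t: "\<tau> \<in> facegram X F' s" "\<mu> \<subseteq> \<tau>" using h unfolding face_le_def by blast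
    have "F' \<sigma> \<le> F' \<tau>" using assms(3) s t m unfolding filtration_def facegram_def by auto
    moreover have "F' \<tau> \<le> s" using t unfolding facegram_def by auto
    ultimately show "F' \<sigma> \<le> s" by simp
  qed
next
  assume h: "\<forall>\<sigma>\<in>powne X. F \<sigma> \<le> t \<longrightarrow> F' \<sigma> \<le> s"
  show "face_le (facegram X F t) (facegram X F' s)"
    unfolding face_le_def
  proof
    fix \<sigma> assume "\<sigma> \<in> facegram X F t"
    hence "\<sigma> \<in> powne X" "F' \<sigma> \<le> s" using h unfolding facegram_def by auto
    thus "\<exists>\<tau>\<in>facegram X F' s. \<sigma> \<subseteq> \<tau>" using max_exists[OF assms(1)] by blast
  qed
qed

theorem mainTheorem8:
  fixes X :: "'a set" and F F' :: "'a set \<Rightarrow> real"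
  assumes "finite X"
    and "filtration X F" and "filtration X F'"
  shows "dI_facegram (facegram X F) (facegram X F') = dI_filtration X F F'"
proof -
  let ?d = "dI_filtration X F F'"
  have fin: "finite (powne X)" using assms(1) by (rule finite_subset[rotated, OF finite_Pow_iff[THEN iffD2]]) (auto simp: powne_def)
  have dle: "?d \<le> e \<longleftrightarrow> 0 \<le> e \<and> (\<forall>\<sigma>\<in>powne X. \<bar>F \<sigma> - F' \<sigma>\<bar> \<le> e)" for e
    unfolding dI_filtration_def using fin by simp
  have valid: "(\<forall>t. face_le (facegram X F t) (facegram X F' (t + e)) \<and> face_le (facegram X F' t) (facegram X F (t + e)))
     \<longleftrightarrow> (\<forall>\<sigma>\<in>powne X. \<bar>F \<sigma> - F' \<sigma>\<bar> \<le> e)" for e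
  proof -
    have "(\<forall>t. face_le (facegram X F t) (facegram X F' (t + e)) \<and> face_le (facegram X F' t) (facegram X F (t + e)))
      \<longleftrightarrow> (\<forall>t. \<forall>\<sigma>\<in>powne X. (F \<sigma> \<le> t \<longrightarrow> F' \<sigma> \<le> t + e) \<and> (F' \<sigma> \<le> t \<longrightarrow> F \<sigma> \<le> t + e))"
      using face_le_iff[OF assms(1,2,3)] face_le_iff[OF assms(1,3,2)] by blast
    also have "\<dots> \<longleftrightarrow> (\<forall>\<sigma>\<in>powne X. \<bar>F \<sigma> - F' \<sigma>\<bar> \<le> e)"
    proof
      assume H: "\<forall>t. \<forall>\<sigma>\<in>powne X. (F \<sigma> \<le> t \<longrightarrow> F' \<sigma> \<le> t + e) \<and> (F' \<sigma> \<le> t \<longrightarrow> F \<sigma> \<le> t + e)"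
      show "\<forall>\<sigma>\<in>powne X. \<bar>F \<sigma> - F' \<sigma>\<bar> \<le> e"
      proof
        fix \<sigma> assume "\<sigma> \<in> powne X"
        with spec[OF H, of "F \<sigma>"] spec[OF H, of "F' \<sigma>"]
        have "F' \<sigma> \<le> F \<sigma> + e" "F \<sigma> \<le> F' \<sigma> + e" by auto
        thus "\<bar>F \<sigma> - F' \<sigma>\<bar> \<le> e" by linarith
      qed
    qed auto
    finally show ?thesis .
  qed
  have S: "{e. e \<ge> 0 \<and> (\<forall>t. face_le (facegram X F t) (facegram X F' (t + e)) \<and> face_le (facegram X F' t) (facegram X F (t + e)))} = {?d..}"
    using valid dle by auto
  show ?thesis unfolding dI_facegram_def S by simp
qed

end
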